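(* Let $f:[0,\infty)\to\mathbb{R}$ be a continuous superquadratic function, let $\Phi:\mathbb{M}_n\to\mathbb{M}_m$ be a unital positive linear map, and let $\tau$ be a state on $\mathbb{M}_m$. Then for every positive semidefinite $A\in\mathbb{M}_n^+$, $$f\big(\tau(\Phi(A))\big)\le \tau\big(\Phi(f(A))\big)-\tau\Big(\Phi\big(f(|A-\tau(\Phi(A))I|)\big)\Big).$$
   Context: A function $f:[0,\infty)\to\mathbb{R}$ is called superquadratic if for every $s\ge 0$ there exists a constant $C_s\in\mathbb{R}$ such that $f(t)\ge f(s)+C_s(t-s)+f(|t-s|)$ for all $t\ge0$. A linear map $\Phi$ is positive if it maps positive semidefinite matrices to positive semidefinite matrices and unital if $\Phi(I)=I$. A state on $\mathbb{M}_m$ is a positive linear functional $\tau$ with $\tau(I)=1$. $f(X)$ is defined by the spectral functional calculus and $|X|=(X^*X)^{1/2}$. *)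

theory Defs
  imports Complex_Main "Jordan_Normal_Form.Schur_Decomposition"
begin

definition hermitian_mat :: "nat \<Rightarrow> complex mat \<Rightarrow> bool" where
  "hermitian_mat n A \<longleftrightarrow> A \<in> carrier_mat n n \<and> mat_adjoint A = A"

definition psd_mat :: "nat \<Rightarrow> complex mat \<Rightarrow> bool" where
  "psd_mat n A \<longleftrightarrow> hermitian_mat n A \<and>
     (\<forall>v \<in> carrier_vec n. 0 \<le> Re ((A *\<^sub>v v) \<bullet>c v))"

definition unitary_mat :: "nat \<Rightarrow> complex mat \<Rightarrow> bool" where
  "unitary_mat n U \<longleftrightarrow> U \<in> carrier_mat n n \<and> mat_adjoint U * U = 1\<^sub>m n"

definition mat_fun :: "(real \<Rightarrow> real) \<Rightarrow> nat \<Rightarrow> complex mat \<Rightarrow> complex mat" where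
  "mat_fun f n A = (SOME B. \<exists>U d. unitary_mat n U \<and>
       A = U * mat_diag n (\<lambda>i. complex_of_real (d i)) * mat_adjoint U \<and>
       B = U * mat_diag n (\<lambda>i. complex_of_real (f (d i))) * mat_adjoint U)"

definition mat_abs :: "nat \<Rightarrow> complex mat \<Rightarrow> complex mat" where
  "mat_abs n X = mat_fun sqrt n (mat_adjoint X * X)"

definition superquadratic :: "(real \<Rightarrow> real) \<Rightarrow> bool" where
  "superquadratic f \<longleftrightarrow> (\<forall>s\<ge>0. \<exists>C. \<forall>t\<ge>0. f t \<ge> f s + C * (t - s) + f \<bar>t - s\<bar>)"

definition linear_map_mat :: "nat \<Rightarrow> nat \<Rightarrow> (complex mat \<Rightarrow> complex mat) \<Rightarrow> bool" where
  "linear_map_mat n m \<Phi> \<longleftrightarrow>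
     (\<forall>A \<in> carrier_mat n n. \<Phi> A \<in> carrier_mat m m) \<and>
     (\<forall>A \<in> carrier_mat n n. \<forall>B \<in> carrier_mat n n. \<Phi> (A + B) = \<Phi> A + \<Phi> B) \<and>
     (\<forall>c. \<forall>A \<in> carrier_mat n n. \<Phi> (c \<cdot>\<^sub>m A) = c \<cdot>\<^sub>m \<Phi> A)"

definition unital_positive_map :: "nat \<Rightarrow> nat \<Rightarrow> (complex mat \<Rightarrow> complex mat) \<Rightarrow> bool" where
  "unital_positive_map n m \<Phi> \<longleftrightarrow> linear_map_mat n m \<Phi> \<and>
     (\<forall>A. psd_mat n A \<longrightarrow> psd_mat m (\<Phi> A)) \<and> \<Phi> (1\<^sub>m n) = 1\<^sub>m m"

definition state_mat :: "nat \<Rightarrow> (complex mat \<Rightarrow> complex) \<Rightarrow> bool" where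
  "state_mat m \<tau> \<longleftrightarrow>
     (\<forall>A \<in> carrier_mat m m. \<forall>B \<in> carrier_mat m m. \<tau> (A + B) = \<tau> A + \<tau> B) \<and>
     (\<forall>c. \<forall>A \<in> carrier_mat m m. \<tau> (c \<cdot>\<^sub>m A) = c * \<tau> A) \<and>
     (\<forall>A. psd_mat m A \<longrightarrow> \<tau> A \<in> \<real> \<and> 0 \<le> Re (\<tau> A)) \<and>
     \<tau> (1\<^sub>m m) = 1"

end

theory Submission
  imports Defs
begin


lemma adj_eq: "mat_adjoint A = mat (dim_col A) (dim_row A) (\<lambda>(i,j). conjugate (A $$ (j,i)))"
  unfolding mat_adjoint_def
  by (rule eq_matI) (auto simp: mat_of_rows_def cols_def)

lemma adj_dims[simp]: "dim_row (mat_adjoint A) = dim_col A" "dim_col (mat_adjoint A) = dim_row A"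
  by (auto simp: adj_eq)

lemma adj_carrier: "A \<in> carrier_mat n m \<Longrightarrow> mat_adjoint A \<in> carrier_mat m n"
  by (auto simp: adj_eq)

lemma adj_index[simp]: "i < dim_col A \<Longrightarrow> j < dim_row A \<Longrightarrow> mat_adjoint A $$ (i,j) = cnj (A $$ (j,i))"
  by (auto simp: adj_eq)

lemma adj_adj[simp]: "mat_adjoint (mat_adjoint A) = (A :: complex mat)"
  by (rule eq_matI) (auto simp: adj_eq)

lemma adj_mult: assumes "(A::complex mat) \<in> carrier_mat n k" "B \<in> carrier_mat k m"
  shows "mat_adjoint (A * B) = mat_adjoint B * mat_adjoint A"
  using assms
  by (intro eq_matI) (auto simp: adj_eq scalar_prod_def cnj_sum mult.commute intro!: sum.cong)

lemma adj_one[simp]: "mat_adjoint (1\<^sub>m n :: complex mat) = 1\<^sub>m n"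
  by (rule eq_matI) (auto simp: adj_eq)

lemma unitary_right: assumes "unitary_mat n U" shows "U * mat_adjoint U = 1\<^sub>m n"
  using assms mat_mult_left_right_inverse[of "mat_adjoint U" n U] unfolding unitary_mat_def
  by (auto simp: adj_carrier)

definition UD :: "nat \<Rightarrow> complex mat \<Rightarrow> (nat \<Rightarrow> real) \<Rightarrow> complex mat" where
  "UD n U a = U * mat_diag n (\<lambda>i. complex_of_real (a i)) * mat_adjoint U"

lemma UD_carrier[simp]: "U \<in> carrier_mat n n \<Longrightarrow> UD n U a \<in> carrier_mat n n"
  unfolding UD_def by auto

lemma UD_index: assumes "U \<in> carrier_mat n n" "i < n" "j < n"
  shows "UD n U a $$ (i,j) = (\<Sum>l=0..<n. U $$ (i,l) * of_real (a l) * cnj (U $$ (j,l)))"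
  using assms unfolding UD_def
  by (simp add: mat_diag_mult_right scalar_prod_def)


lemma unitary_carrier[simp]: "unitary_mat n U \<Longrightarrow> U \<in> carrier_mat n n"
  by (simp add: unitary_mat_def)

lemma unit_cancel1: assumes "unitary_mat n U" "X \<in> carrier_mat n k"
  shows "mat_adjoint U * (U * X) = X"
proof -
  have "mat_adjoint U * (U * X) = (mat_adjoint U * U) * X"
    using assms by (subst assoc_mult_mat[of _ n n _ n _ k]) (auto simp: adj_carrier)
  thus ?thesis using assms unfolding unitary_mat_def by auto
qed

lemma unit_cancel2: assumes "unitary_mat n U" "X \<in> carrier_mat n k"
  shows "U * (mat_adjoint U * X) = X"
proof -
  have "U * (mat_adjoint U * X) = (U * mat_adjoint U) * X"
    using assms by (subst assoc_mult_mat[of _ n n _ n _ k]) (auto simp: adj_carrier)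
  thus ?thesis using assms unitary_right[OF assms(1)] by auto
qed

lemma UD_dims[simp]: "U \<in> carrier_mat n n \<Longrightarrow> dim_row (UD n U a) = n"
  "U \<in> carrier_mat n n \<Longrightarrow> dim_col (UD n U a) = n"
  unfolding UD_def by auto

lemma UD_add: assumes "U \<in> carrier_mat n n"
  shows "UD n U a + UD n U b = UD n U (\<lambda>i. a i + b i)"
  using assms by (intro eq_matI) (auto simp: UD_index distrib_left distrib_right sum.distrib)

lemma UD_minus: assumes "U \<in> carrier_mat n n"
  shows "UD n U a - UD n U b = UD n U (\<lambda>i. a i - b i)"
  using assms by (intro eq_matI) (auto simp: UD_index sum_subtractf[symmetric] algebra_simps intro!: sum.cong)

lemma UD_smult: assumes "U \<in> carrier_mat n n"
  shows "complex_of_real c \<cdot>\<^sub>m UD n U a = UD n U (\<lambda>i. c * a i)"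
  using assms by (intro eq_matI) (auto simp: UD_index sum_distrib_left algebra_simps intro!: sum.cong)

lemma UD_adj: assumes "U \<in> carrier_mat n n"
  shows "mat_adjoint (UD n U a) = UD n U a"
  using assms by (intro eq_matI) (auto simp: UD_index cnj_sum algebra_simps intro!: sum.cong)

lemma UD_one: assumes "unitary_mat n U"
  shows "UD n U (\<lambda>_. 1) = 1\<^sub>m n"
proof -
  have U: "U \<in> carrier_mat n n" using assms by simp
  have "UD n U (\<lambda>_. 1) = U * 1\<^sub>m n * mat_adjoint U" unfolding UD_def by simp
  also have "\<dots> = U * mat_adjoint U" using U by simp
  finally show ?thesis using unitary_right[OF assms] by simp
qed

lemma UD_mult: assumes "unitary_mat n U"
  shows "UD n U a * UD n U b = UD n U (\<lambda>i. a i * b i)"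
proof -
  have U: "U \<in> carrier_mat n n" and U': "mat_adjoint U \<in> carrier_mat n n" using assms by (auto simp: adj_carrier)
  define Da where "Da = mat_diag n (\<lambda>i. complex_of_real (a i))"
  define Db where "Db = mat_diag n (\<lambda>i. complex_of_real (b i))"
  have Da: "Da \<in> carrier_mat n n" and Db: "Db \<in> carrier_mat n n" by (auto simp: Da_def Db_def)
  have "UD n U a * UD n U b = (U * Da * mat_adjoint U) * (U * Db * mat_adjoint U)"
    unfolding UD_def Da_def Db_def ..
  also have "\<dots> = U * (Da * (mat_adjoint U * (U * (Db * mat_adjoint U))))"
    using U U' Da Db by (simp add: assoc_mult_mat[of _ n n _ n _ n])
  also have "mat_adjoint U * (U * (Db * mat_adjoint U)) = Db * mat_adjoint U"
    using Db U' by (intro unit_cancel1[OF assms]) auto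
  also have "U * (Da * (Db * mat_adjoint U)) = U * (Da * Db) * mat_adjoint U"
    using U U' Da Db by (simp add: assoc_mult_mat[of _ n n _ n _ n])
  also have "Da * Db = mat_diag n (\<lambda>i. complex_of_real (a i * b i))"
    by (simp add: Da_def Db_def)
  finally show ?thesis unfolding UD_def .
qed

lemma UD_unique: assumes uU: "unitary_mat n U" and uV: "unitary_mat n V"
  and eq: "UD n U a = UD n V b"
  shows "UD n U (\<lambda>i. g (a i)) = UD n V (\<lambda>i. g (b i))"
proof -
  have U: "U \<in> carrier_mat n n" and U': "mat_adjoint U \<in> carrier_mat n n"
   and V: "V \<in> carrier_mat n n" and V': "mat_adjoint V \<in> carrier_mat n n" using uU uV by (auto simp: adj_carrier)
  define W where "W = mat_adjoint V * U"
  have W: "W \<in> carrier_mat n n" using U V' by (simp add: W_def)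
  define Da where "Da = mat_diag n (\<lambda>i. complex_of_real (a i))"
  define Db where "Db = mat_diag n (\<lambda>i. complex_of_real (b i))"
  define Ga where "Ga = mat_diag n (\<lambda>i. complex_of_real (g (a i)))"
  define Gb where "Gb = mat_diag n (\<lambda>i. complex_of_real (g (b i)))"
  have Da: "Da \<in> carrier_mat n n" and Db: "Db \<in> carrier_mat n n"
   and Ga: "Ga \<in> carrier_mat n n" and Gb: "Gb \<in> carrier_mat n n"
    by (auto simp: Da_def Db_def Ga_def Gb_def)
  have "W * Da = mat_adjoint V * (U * (Da * (mat_adjoint U * U)))"
    using uU U U' V' Da unfolding W_def unitary_mat_def by (simp add: assoc_mult_mat[of _ n n _ n _ n])
  also have "\<dots> = mat_adjoint V * (U * Da * mat_adjoint U) * U"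
    using U U' V' Da by (simp add: assoc_mult_mat[of _ n n _ n _ n])
  also have "U * Da * mat_adjoint U = V * Db * mat_adjoint V"
    using eq unfolding UD_def Da_def Db_def .
  also have "mat_adjoint V * (V * Db * mat_adjoint V) * U = mat_adjoint V * (V * (Db * W))"
    using V V' U Db unfolding W_def by (simp add: assoc_mult_mat[of _ n n _ n _ n])
  also have "\<dots> = Db * W" using Db W by (intro unit_cancel1[OF uV]) auto
  finally have WD: "W * Da = Db * W" .
  have WG: "W * Ga = Gb * W"
  proof (rule eq_matI)
    fix i j assume i: "i < dim_row (Gb * W)" and j: "j < dim_col (Gb * W)"
    hence ij: "i < n" "j < n" using W Gb by auto
    have "(W * Da) $$ (i,j) = (Db * W) $$ (i,j)" using WD by simp
    hence "W $$ (i,j) * a j = b i * W $$ (i,j)"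
      using ij W unfolding Da_def Db_def by (simp add: mat_diag_mult_left mat_diag_mult_right)
    hence "W $$ (i,j) = 0 \<or> a j = b i" by (metis mult.commute mult_cancel_left of_real_eq_iff)
    thus "(W * Ga) $$ (i,j) = (Gb * W) $$ (i,j)"
      using ij W unfolding Ga_def Gb_def by (auto simp: mat_diag_mult_left mat_diag_mult_right)
  qed (use W Ga Gb in auto)
  have "UD n U (\<lambda>i. g (a i)) = U * Ga * mat_adjoint U" unfolding UD_def Ga_def ..
  also have "\<dots> = V * (mat_adjoint V * (U * (Ga * mat_adjoint U)))"
  proof -
    have c: "U * (Ga * mat_adjoint U) \<in> carrier_mat n n" using U U' Ga by auto
    show ?thesis unfolding unit_cancel2[OF uV c] by (rule assoc_mult_mat[OF U Ga U'])
  qed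
  also have "\<dots> = V * (W * Ga) * mat_adjoint U"
    using U U' V V' Ga unfolding W_def by (simp add: assoc_mult_mat[of _ n n _ n _ n])
  also have "\<dots> = V * (Gb * (mat_adjoint V * (U * mat_adjoint U)))"
    unfolding WG using U U' V V' Gb unfolding W_def by (simp add: assoc_mult_mat[of _ n n _ n _ n])
  also have "\<dots> = V * Gb * mat_adjoint V"
    using unitary_right[OF uU] V V' Gb by (simp add: assoc_mult_mat[of _ n n _ n _ n])
  finally show ?thesis unfolding UD_def Gb_def .
qed

lemma mat_fun_UD: assumes "unitary_mat n U"
  shows "mat_fun f n (UD n U a) = UD n U (\<lambda>i. f (a i))"
proof -
  let ?P = "\<lambda>B. \<exists>V e. unitary_mat n V \<and>
       UD n U a = V * mat_diag n (\<lambda>i. complex_of_real (e i)) * mat_adjoint V \<and>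
       B = V * mat_diag n (\<lambda>i. complex_of_real (f (e i))) * mat_adjoint V"
  have "?P (UD n U (\<lambda>i. f (a i)))" using assms unfolding UD_def by blast
  hence "?P (mat_fun f n (UD n U a))" unfolding mat_fun_def by (rule someI)
  then obtain V e where V: "unitary_mat n V" and e1: "UD n U a = UD n V e"
    and e2: "mat_fun f n (UD n U a) = UD n V (\<lambda>i. f (e i))" unfolding UD_def by blast
  show ?thesis unfolding e2 using UD_unique[OF assms V e1] by simp
qed

lemma adj_vec: assumes "(A::complex mat) \<in> carrier_mat n m" "x \<in> carrier_vec m" "y \<in> carrier_vec n"
  shows "(A *\<^sub>v x) \<bullet>c y = x \<bullet>c (mat_adjoint A *\<^sub>v y)"
proof -
  have "(A *\<^sub>v x) \<bullet>c y = (\<Sum>i<n. \<Sum>j<m. A $$ (i,j) * x $ j * cnj (y $ i))"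
    using assms by (simp add: scalar_prod_def sum_distrib_right atLeast0LessThan row_def)
  also have "\<dots> = (\<Sum>j<m. \<Sum>i<n. A $$ (i,j) * x $ j * cnj (y $ i))" by (rule sum.swap)
  also have "\<dots> = x \<bullet>c (mat_adjoint A *\<^sub>v y)"
    using assms by (simp add: scalar_prod_def sum_distrib_left atLeast0LessThan row_def cnj_sum mult_ac)
  finally show ?thesis .
qed

lemma quad_UD: assumes uU: "unitary_mat n U" and v: "v \<in> carrier_vec n"
  shows "(UD n U a *\<^sub>v v) \<bullet>c v = complex_of_real (\<Sum>l<n. a l * (cmod ((mat_adjoint U *\<^sub>v v) $ l))^2)"
proof -
  have U: "U \<in> carrier_mat n n" and U': "mat_adjoint U \<in> carrier_mat n n" using uU by (auto simp: adj_carrier)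
  define D where "D = mat_diag n (\<lambda>i. complex_of_real (a i))"
  have D: "D \<in> carrier_mat n n" by (simp add: D_def)
  define w where "w = mat_adjoint U *\<^sub>v v"
  have w: "w \<in> carrier_vec n" using U' v by (simp add: w_def)
  have "UD n U a *\<^sub>v v = U *\<^sub>v (D *\<^sub>v w)"
    unfolding UD_def D_def[symmetric] w_def using U U' D v
    by (simp add: assoc_mult_mat[of _ n n _ n _ n] assoc_mult_mat_vec[of _ n n _ n])
  hence "(UD n U a *\<^sub>v v) \<bullet>c v = (D *\<^sub>v w) \<bullet>c w"
    using adj_vec[OF U _ v, of "D *\<^sub>v w"] D w unfolding w_def by simp
  also have "\<dots> = (\<Sum>l<n. complex_of_real (a l) * w $ l * cnj (w $ l))"
  proof -
    have e: "\<And>P x y. (if P then x else 0) * (y::complex) = (if P then x * y else 0)" by simp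
    show ?thesis using D w unfolding D_def by (simp add: scalar_prod_def atLeast0LessThan row_def mat_diag_def e)
  qed
  also have "\<dots> = complex_of_real (\<Sum>l<n. a l * (cmod (w $ l))^2)"
    by (simp add: mult.assoc flip: complex_norm_square)
  finally show ?thesis unfolding w_def .
qed

lemma psd_UD: assumes uU: "unitary_mat n U" and a: "\<And>i. i < n \<Longrightarrow> a i \<ge> 0"
  shows "psd_mat n (UD n U a)"
  unfolding psd_mat_def hermitian_mat_def
proof (intro conjI ballI)
  have U: "U \<in> carrier_mat n n" using uU by simp
  show "UD n U a \<in> carrier_mat n n" using U by simp
  show "mat_adjoint (UD n U a) = UD n U a" using UD_adj[OF U] .
  fix v :: "complex vec" assume v: "v \<in> carrier_vec n"
  show "0 \<le> Re ((UD n U a *\<^sub>v v) \<bullet>c v)" unfolding quad_UD[OF uU v] Re_complex_of_real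
    using a by (intro sum_nonneg mult_nonneg_nonneg) auto
qed

lemma psd_UD_nonneg: assumes uU: "unitary_mat n U" and p: "psd_mat n (UD n U a)" and i: "i < n"
  shows "a i \<ge> 0"
proof -
  have U: "U \<in> carrier_mat n n" and U': "mat_adjoint U \<in> carrier_mat n n" using uU by (auto simp: adj_carrier)
  have v: "col U i \<in> carrier_vec n" by (rule col_carrier_vec[OF i U])
  have "mat_adjoint U *\<^sub>v col U i = col (mat_adjoint U * U) i" by (rule col_mult2[OF U' U i, symmetric])
  also have "\<dots> = col (1\<^sub>m n) i" using uU unfolding unitary_mat_def by simp
  also have "\<dots> = unit_vec n i" by (rule col_one[OF i])
  finally have e: "mat_adjoint U *\<^sub>v col U i = (unit_vec n i :: complex vec)" .
  have "\<forall>v\<in>carrier_vec n. 0 \<le> Re ((UD n U a *\<^sub>v v) \<bullet>c v)" using p unfolding psd_mat_def by (rule conjunct2)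
  hence "0 \<le> Re ((UD n U a *\<^sub>v col U i) \<bullet>c col U i)" using v by (rule bspec)
  also have "\<dots> = (\<Sum>l<n. a l * (cmod (unit_vec n i $ l))^2)" unfolding quad_UD[OF uU v] e Re_complex_of_real ..
  also have "\<dots> = (\<Sum>l<n. if l = i then a i else 0)"
    by (intro sum.cong refl) (simp add: unit_vec_def)
  also have "\<dots> = a i" using i by simp
  finally show ?thesis .
qed

lemma eig_sub:
  fixes B :: "complex mat"
  assumes B: "B \<in> carrier_mat n n" and k: "k < n"
    and z: "\<And>i j. i < k \<Longrightarrow> k \<le> j \<Longrightarrow> j < n \<Longrightarrow> B $$ (i,j) = 0"
  shows "\<exists>\<mu> x. x \<in> carrier_vec n \<and> x \<noteq> 0\<^sub>v n \<and> (\<forall>i<k. x $ i = 0) \<and> B *\<^sub>v x = \<mu> \<cdot>\<^sub>v x"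
proof -
  define m where "m = n - k"
  have nm: "n = m + k" using k by (simp add: m_def)
  define C where "C = mat m m (\<lambda>(i,j). B $$ (i+k, j+k))"
  have C: "C \<in> carrier_mat m m" by (simp add: C_def)
  obtain as where cp: "char_poly C = (\<Prod>a\<leftarrow>as. [:-a,1:])" and len: "length as = m"
    using char_poly_factorized[OF C] by blast
  have m0: "m > 0" using k by (simp add: m_def)
  then obtain \<mu> rest where as: "as = \<mu> # rest" using len by (cases as) auto
  have "poly (char_poly C) \<mu> = 0" unfolding cp as by simp
  hence "eigenvalue C \<mu>" using eigenvalue_root_char_poly[OF C] by simp
  then obtain y where y: "y \<in> carrier_vec m" "y \<noteq> 0\<^sub>v m" "C *\<^sub>v y = \<mu> \<cdot>\<^sub>v y"
    unfolding eigenvalue_def eigenvector_def using C by auto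
  define x where "x = vec n (\<lambda>i. if i < k then 0 else y $ (i - k))"
  have x: "x \<in> carrier_vec n" by (simp add: x_def)
  have x0: "\<forall>i<k. x $ i = 0" using k by (simp add: x_def)
  have xn0: "x \<noteq> 0\<^sub>v n"
  proof
    assume "x = 0\<^sub>v n"
    hence "\<And>i. i < m \<Longrightarrow> y $ i = 0"
    proof -
      fix i assume "x = 0\<^sub>v n" "i < m"
      hence "x $ (i + k) = 0" using nm by simp
      thus "y $ i = 0" using \<open>i < m\<close> nm by (simp add: x_def)
    qed
    hence "y = 0\<^sub>v m" using y(1) by (intro eq_vecI) auto
    thus False using y(2) by simp
  qed
  have "B *\<^sub>v x = \<mu> \<cdot>\<^sub>v x"
  proof (rule eq_vecI)
    fix i assume "i < dim_vec (\<mu> \<cdot>\<^sub>v x)"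
    hence i: "i < n" by (simp add: x_def)
    have e1: "(B *\<^sub>v x) $ i = (\<Sum>j=0..<n. B $$ (i,j) * x $ j)"
      using B i x by (simp add: scalar_prod_def row_def)
    also have "\<dots> = (\<Sum>j=0..<k. B $$ (i,j) * x $ j) + (\<Sum>j=k..<n. B $$ (i,j) * x $ j)"
      using k by (simp add: sum.atLeastLessThan_concat)
    also have "(\<Sum>j=0..<k. B $$ (i,j) * x $ j) = 0" using x0 by simp
    also have "(\<Sum>j=k..<n. B $$ (i,j) * x $ j) = (\<Sum>j=0..<m. B $$ (i,j+k) * x $ (j+k))"
      using sum.shift_bounds_nat_ivl[of "\<lambda>j. B $$ (i,j) * x $ j" 0 k m] nm by simp
    also have "\<dots> = (\<Sum>j=0..<m. B $$ (i,j+k) * y $ j)"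
      by (intro sum.cong refl) (simp add: x_def nm)
    finally have e: "(B *\<^sub>v x) $ i = (\<Sum>j=0..<m. B $$ (i,j+k) * y $ j)" by simp
    show "(B *\<^sub>v x) $ i = (\<mu> \<cdot>\<^sub>v x) $ i"
    proof (cases "i < k")
      case True
      thus ?thesis unfolding e using z i nm x0 x by simp
    next
      case False
      have "(C *\<^sub>v y) $ (i - k) = (\<Sum>j=0..<m. B $$ (i,j+k) * y $ j)"
        using False i nm y(1) by (simp add: C_def scalar_prod_def row_def)
      thus ?thesis unfolding e using y(3) False i nm y(1) x by (simp add: x_def)
    qed
  qed (use B in \<open>simp add: x_def\<close>)
  thus ?thesis using x xn0 x0 by blast
qed

lemma eig_unit:
  fixes B :: "complex mat"
  assumes B: "B \<in> carrier_mat n n" and k: "k < n"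
    and z: "\<And>i j. i < k \<Longrightarrow> k \<le> j \<Longrightarrow> j < n \<Longrightarrow> B $$ (i,j) = 0"
  shows "\<exists>\<mu> u. u \<in> carrier_vec n \<and> (\<Sum>i<n. (cmod (u $ i))^2) = 1 \<and> (\<forall>i<k. u $ i = 0)
     \<and> Im (u $ k) = 0 \<and> B *\<^sub>v u = \<mu> \<cdot>\<^sub>v u"
proof -
  obtain \<mu> x where x: "x \<in> carrier_vec n" and xn0: "x \<noteq> 0\<^sub>v n" and x0: "\<forall>i<k. x $ i = 0"
    and ev: "B *\<^sub>v x = \<mu> \<cdot>\<^sub>v x"
    using eig_sub[OF B k z] by blast
  obtain i0 where i0: "i0 < n" "x $ i0 \<noteq> 0"
  proof -
    have "\<exists>i<n. x $ i \<noteq> 0"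
    proof (rule ccontr)
      assume "\<not> ?thesis"
      hence "x = 0\<^sub>v n" using x by (intro eq_vecI) auto
      thus False using xn0 by simp
    qed
    thus ?thesis using that by blast
  qed
  define s where "s = (\<Sum>i<n. (cmod (x $ i))^2)"
  have "(cmod (x $ i0))^2 \<le> s" unfolding s_def
    using i0 by (intro member_le_sum) auto
  moreover have "(cmod (x $ i0))^2 > 0" using i0 by simp
  ultimately have s0: "s > 0" by linarith
  define r where "r = sqrt s"
  have r0: "r > 0" using s0 by (simp add: r_def)
  have rr: "r^2 = s" using s0 by (simp add: r_def)
  define ph where "ph = (if x $ k = 0 then 1 else cnj (x $ k) / complex_of_real (cmod (x $ k)))"
  have ph1: "cmod ph = 1" by (simp add: ph_def norm_divide)
  define c where "c = ph / complex_of_real r"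
  define u where "u = c \<cdot>\<^sub>v x"
  have u: "u \<in> carrier_vec n" using x by (simp add: u_def)
  have "B *\<^sub>v u = \<mu> \<cdot>\<^sub>v u" using B x ev by (simp add: u_def mult_mat_vec smult_smult_assoc mult.commute)
  moreover have "(\<Sum>i<n. (cmod (u $ i))^2) = 1"
  proof -
    have "(\<Sum>i<n. (cmod (u $ i))^2) = (\<Sum>i<n. (cmod c)^2 * (cmod (x $ i))^2)"
      using x by (intro sum.cong refl) (simp add: u_def norm_mult power_mult_distrib)
    also have "\<dots> = (cmod c)^2 * s" by (simp add: s_def sum_distrib_left)
    also have "cmod c = 1 / r" using ph1 r0 by (simp add: c_def norm_divide)
    finally show ?thesis using rr r0 s0 by (simp add: power_divide)
  qed
  moreover have "\<forall>i<k. u $ i = 0" using x0 x k by (simp add: u_def)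
  moreover have "Im (u $ k) = 0"
  proof (cases "x $ k = 0")
    case True thus ?thesis using x k by (simp add: u_def)
  next
    case False
    have "u $ k = cnj (x $ k) * x $ k / complex_of_real (cmod (x $ k) * r)"
      using x k False by (simp add: u_def c_def ph_def)
    also have "cnj (x $ k) * x $ k = complex_of_real ((cmod (x $ k))^2)"
      by (metis complex_norm_square mult.commute)
    finally have "u $ k = complex_of_real ((cmod (x $ k))^2 / (cmod (x $ k) * r))" by simp
    thus ?thesis by simp
  qed
  ultimately show ?thesis using u by blast
qed

lemma mv_unit: assumes "(A :: complex mat) \<in> carrier_mat n m" "j < m"
  shows "A *\<^sub>v unit_vec m j = col A j"
  using assms by (intro eq_vecI) (auto simp: carrier_matD)

lemma sum_delta_prod: fixes X Y :: "nat \<Rightarrow> complex" assumes "i < n" "j < n"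
  shows "(\<Sum>l=0..<n. ((if i = l then 1 else 0) - X l) * ((if l = j then 1 else 0) - Y l))
     = (if i = j then 1 else 0) - X j - Y i + (\<Sum>l=0..<n. X l * Y l)"
proof -
  have "(\<Sum>l=0..<n. ((if i = l then 1 else 0) - X l) * ((if l = j then 1 else 0) - Y l))
    = (\<Sum>l=0..<n. (if l = i then (if i = j then 1 else 0) else 0) - (if l = j then X l else 0)
          - (if l = i then Y l else 0) + X l * Y l)"
    by (intro sum.cong refl) (auto simp: algebra_simps)
  also have "\<dots> = (if i = j then 1 else 0) - X j - Y i + (\<Sum>l=0..<n. X l * Y l)"
    using assms by (simp add: sum.distrib sum_subtractf)
  finally show ?thesis .
qed

lemma householder:
  assumes u: "u \<in> carrier_vec n" and k: "k < n" and un: "(\<Sum>i<n. (cmod (u $ i))^2) = 1"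
    and u0: "\<forall>i<k. u $ i = 0" and uk: "Im (u $ k) = 0"
  shows "\<exists>V. unitary_mat n V \<and> mat_adjoint V = V \<and> V *\<^sub>v unit_vec n k = u
     \<and> (\<forall>j<k. V *\<^sub>v unit_vec n j = unit_vec n j)"
proof -
  define w where "w = vec n (\<lambda>i. (if i = k then 1 else 0) - u $ i)"
  define t where "t = (\<Sum>i<n. (cmod (w $ i))^2)"
  define c where "c = 2 / t"
  define V where "V = mat n n (\<lambda>(i,j). (if i = j then 1 else 0) - complex_of_real c * w $ i * cnj (w $ j))"
  have V: "V \<in> carrier_mat n n" by (simp add: V_def)
  have wk: "w $ k = complex_of_real (1 - Re (u $ k))" using k uk by (simp add: w_def complex_eq_iff)
  have t: "t = 2 * (1 - Re (u $ k))"
  proof -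
    have "t = (\<Sum>i<n. (cmod (u $ i))^2 + (if i = k then 1 - 2 * Re (u $ k) else 0))"
      unfolding t_def
    proof (intro sum.cong refl)
      fix i assume "i \<in> {..<n}"
      thus "(cmod (w $ i))^2 = (cmod (u $ i))^2 + (if i = k then 1 - 2 * Re (u $ k) else 0)"
        using uk by (auto simp: w_def cmod_power2 power2_diff)
    qed
    also have "\<dots> = 2 * (1 - Re (u $ k))" using un k by (simp add: sum.distrib)
    finally show ?thesis .
  qed
  have cct: "c * c * t = 2 * c" by (cases "t = 0") (auto simp: c_def)
  have adjV: "mat_adjoint V = V"
    by (rule eq_matI) (auto simp: adj_eq V_def)
  have VV: "V * V = 1\<^sub>m n"
  proof (rule eq_matI)
    fix i j assume "i < dim_row (1\<^sub>m n :: complex mat)" "j < dim_col (1\<^sub>m n :: complex mat)"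
    hence i: "i < n" and j: "j < n" by auto
    have "(V * V) $$ (i,j) = (\<Sum>l=0..<n. ((if i = l then 1 else 0) - complex_of_real c * w $ i * cnj (w $ l))
           * ((if l = j then 1 else 0) - complex_of_real c * w $ l * cnj (w $ j)))"
      using i j by (simp add: V_def scalar_prod_def)
    also have "\<dots> = (if i = j then 1 else 0) - complex_of_real c * w $ i * cnj (w $ j)
       - complex_of_real c * w $ i * cnj (w $ j)
       + (\<Sum>l=0..<n. complex_of_real c * w $ i * cnj (w $ l) * (complex_of_real c * w $ l * cnj (w $ j)))"
      by (rule sum_delta_prod[OF i j])
    also have "(\<Sum>l=0..<n. complex_of_real c * w $ i * cnj (w $ l) * (complex_of_real c * w $ l * cnj (w $ j)))
       = complex_of_real (c * c) * w $ i * cnj (w $ j) * (\<Sum>l=0..<n. w $ l * cnj (w $ l))"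
      by (simp add: sum_distrib_left mult_ac)
    also have "(\<Sum>l=0..<n. w $ l * cnj (w $ l)) = complex_of_real t"
      by (simp add: t_def atLeast0LessThan flip: complex_norm_square)
    finally have "(V * V) $$ (i,j) = (if i = j then 1 else 0)
        + complex_of_real (c * c * t - 2 * c) * w $ i * cnj (w $ j)"
      by (simp add: algebra_simps)
    thus "(V * V) $$ (i,j) = 1\<^sub>m n $$ (i,j)" using i j cct by simp
  qed (use V in auto)
  have uV: "unitary_mat n V" unfolding unitary_mat_def adjV using V VV by simp
  have colV: "\<And>j. j < n \<Longrightarrow> V *\<^sub>v unit_vec n j = vec n (\<lambda>i. (if i = j then 1 else 0) - complex_of_real c * w $ i * cnj (w $ j))"
    using V by (subst mv_unit[OF V]) (auto simp: V_def)
  have "V *\<^sub>v unit_vec n k = u"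
  proof (cases "t = 0")
    case True
    hence "c = 0" by (simp add: c_def)
    have "Re (u $ k) = 1" using True t by simp
    hence "w $ k = 0" using wk by simp
    have "\<And>i. i < n \<Longrightarrow> cmod (w $ i) ^ 2 = 0"
      using True unfolding t_def by (subst (asm) sum_nonneg_eq_0_iff) auto
    hence w0: "\<And>i. i < n \<Longrightarrow> w $ i = 0" by simp
    show ?thesis unfolding colV[OF k] \<open>c = 0\<close>
    proof (rule eq_vecI)
      fix i assume "i < dim_vec u"
      hence i: "i < n" using u by simp
      have "w $ i = 0" by (rule w0[OF i])
      thus "vec n (\<lambda>i. (if i = k then 1 else 0) - complex_of_real 0 * w $ i * cnj (w $ k)) $ i = u $ i"
        using i by (simp add: w_def)
    qed (use u in simp)
  next
    case False
    have "complex_of_real c * cnj (w $ k) = 1"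
    proof -
      have "1 - Re (u $ k) \<noteq> 0" using False t by simp
      thus ?thesis unfolding wk c_def t by (simp add: field_simps)
    qed
    show ?thesis unfolding colV[OF k]
    proof (rule eq_vecI)
      fix i assume "i < dim_vec u"
      hence i: "i < n" using u by simp
      have e: "complex_of_real c * w $ i * cnj (w $ k) = w $ i"
        using \<open>complex_of_real c * cnj (w $ k) = 1\<close> by (simp add: mult_ac)
      have wi: "w $ i = (if i = k then 1 else 0) - u $ i" using i by (simp add: w_def)
      have "vec n (\<lambda>i. (if i = k then 1 else 0) - complex_of_real c * w $ i * cnj (w $ k)) $ i
         = (if i = k then 1 else 0) - w $ i" using i e by simp
      also have "\<dots> = u $ i" unfolding wi by simp
      finally show "vec n (\<lambda>i. (if i = k then 1 else 0) - complex_of_real c * w $ i * cnj (w $ k)) $ i = u $ i" .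
    qed (use u in simp)
  qed
  moreover have "\<forall>j<k. V *\<^sub>v unit_vec n j = unit_vec n j"
  proof (intro allI impI)
    fix j assume j: "j < k"
    have "w $ j = 0" using j k u0 by (simp add: w_def)
    thus "V *\<^sub>v unit_vec n j = unit_vec n j" unfolding colV[OF less_trans[OF j k]]
      by (intro eq_vecI) (auto simp: unit_vec_def)
  qed
  ultimately show ?thesis using uV adjV by blast
qed



lemma unitary_mult: assumes uU: "unitary_mat n U" and uV: "unitary_mat n V"
  shows "unitary_mat n (U * V)"
proof -
  have U: "U \<in> carrier_mat n n" and U': "mat_adjoint U \<in> carrier_mat n n"
   and V: "V \<in> carrier_mat n n" and V': "mat_adjoint V \<in> carrier_mat n n" using uU uV by (auto simp: adj_carrier)
  have "mat_adjoint (U * V) * (U * V) = (mat_adjoint V * mat_adjoint U) * (U * V)"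
    using adj_mult[OF U V] by simp
  also have "\<dots> = mat_adjoint V * (mat_adjoint U * (U * V))"
    using U U' V V' by (simp add: assoc_mult_mat[of _ n n _ n _ n])
  also have "mat_adjoint U * (U * V) = V" by (rule unit_cancel1[OF uU V])
  also have "mat_adjoint V * V = 1\<^sub>m n" using uV unfolding unitary_mat_def by simp
  finally show ?thesis unfolding unitary_mat_def using U V by simp
qed

lemma col_zero_offdiag: assumes "(B :: complex mat) \<in> carrier_mat n n" "j < n" "i < n" "i \<noteq> j"
  and "B *\<^sub>v unit_vec n j = c \<cdot>\<^sub>v unit_vec n j"
  shows "B $$ (i,j) = 0"
proof -
  have "B $$ (i,j) = col B j $ i" using assms by simp
  also have "col B j = c \<cdot>\<^sub>v unit_vec n j" using assms mv_unit[OF assms(1,2)] by simp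
  also have "\<dots> $ i = 0" using assms by simp
  finally show ?thesis .
qed

lemma diag_k: assumes hA: "hermitian_mat n A"
  shows "k \<le> n \<Longrightarrow> \<exists>W. unitary_mat n W \<and> (\<forall>i<n. \<forall>j<k. i \<noteq> j \<longrightarrow> (mat_adjoint W * A * W) $$ (i,j) = 0)"
proof (induction k)
  case 0
  have "unitary_mat n (1\<^sub>m n)" unfolding unitary_mat_def by simp
  thus ?case by blast
next
  case (Suc k)
  hence k: "k < n" by simp
  from Suc obtain W where uW: "unitary_mat n W"
    and IH: "\<forall>i<n. \<forall>j<k. i \<noteq> j \<longrightarrow> (mat_adjoint W * A * W) $$ (i,j) = 0" by auto
  have A: "A \<in> carrier_mat n n" and adjA: "mat_adjoint A = A" using hA unfolding hermitian_mat_def by auto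
  have W: "W \<in> carrier_mat n n" and W': "mat_adjoint W \<in> carrier_mat n n" using uW by (auto simp: adj_carrier)
  define B where "B = mat_adjoint W * A * W"
  have B: "B \<in> carrier_mat n n" using A W W' by (simp add: B_def)
  have adjB: "mat_adjoint B = B"
  proof -
    have "mat_adjoint B = mat_adjoint W * mat_adjoint (mat_adjoint W * A)"
      unfolding B_def using adj_mult[of "mat_adjoint W * A" n n W n] A W W' by simp
    also have "mat_adjoint (mat_adjoint W * A) = A * W"
      using adj_mult[OF W' A] adjA by simp
    finally show ?thesis unfolding B_def using A W W' by (simp add: assoc_mult_mat[of _ n n _ n _ n])
  qed
  have hBz: "\<And>i j. i < n \<Longrightarrow> j < n \<Longrightarrow> i \<noteq> j \<Longrightarrow> i < k \<or> j < k \<Longrightarrow> B $$ (i,j) = 0"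
  proof -
    fix i j assume i: "i < n" and j: "j < n" and ij: "i \<noteq> j" and or: "i < k \<or> j < k"
    show "B $$ (i,j) = 0"
    proof (cases "j < k")
      case True show ?thesis using IH[rule_format, OF i True ij] unfolding B_def .
    next
      case False
      hence ik: "i < k" using or by simp
      have "B $$ (j,i) = 0" using IH[rule_format, OF j ik] ij unfolding B_def by simp
      moreover have "B $$ (i,j) = cnj (B $$ (j,i))"
        using arg_cong[OF adjB, of "\<lambda>M. M $$ (i,j)"] B i j by simp
      ultimately show ?thesis by simp
    qed
  qed
  obtain \<mu> u where u: "u \<in> carrier_vec n" and un: "(\<Sum>i<n. (cmod (u $ i))^2) = 1"
    and u0: "\<forall>i<k. u $ i = 0" and uk: "Im (u $ k) = 0" and ev: "B *\<^sub>v u = \<mu> \<cdot>\<^sub>v u"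
  proof -
    have z: "\<And>i j. i < k \<Longrightarrow> k \<le> j \<Longrightarrow> j < n \<Longrightarrow> B $$ (i,j) = 0"
    proof -
      fix i j assume "i < k" "k \<le> j" "j < n"
      moreover hence "i < n" "i \<noteq> j" by auto
      ultimately show "B $$ (i,j) = 0" using hBz by blast
    qed
    show ?thesis using eig_unit[OF B k z] that by blast
  qed
  obtain V where uV: "unitary_mat n V" and adjV: "mat_adjoint V = V" and Vk: "V *\<^sub>v unit_vec n k = u"
    and Vj: "\<forall>j<k. V *\<^sub>v unit_vec n j = unit_vec n j"
    using householder[OF u k un u0 uk] by blast
  have V: "V \<in> carrier_mat n n" using uV by simp
  have VV: "V * V = 1\<^sub>m n" using uV adjV unfolding unitary_mat_def by simp
  have uWV: "unitary_mat n (W * V)" by (rule unitary_mult[OF uW uV])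
  have B2: "mat_adjoint (W * V) * A * (W * V) = V * B * V"
  proof -
    have "mat_adjoint (W * V) * A * (W * V) = (V * mat_adjoint W) * A * (W * V)"
      using adj_mult[OF W V] adjV by simp
    also have "\<dots> = V * B * V" unfolding B_def using A W W' V
      by (simp add: assoc_mult_mat[of _ n n _ n _ n])
    finally show ?thesis .
  qed
  have VBV: "\<And>x. x \<in> carrier_vec n \<Longrightarrow> (V * B * V) *\<^sub>v x = V *\<^sub>v (B *\<^sub>v (V *\<^sub>v x))"
    using V B by (simp add: assoc_mult_mat_vec[of _ n n _ n])
  have "\<forall>i<n. \<forall>j<Suc k. i \<noteq> j \<longrightarrow> (V * B * V) $$ (i,j) = 0"
  proof (intro allI impI)
    fix i j assume i: "i < n" and j: "j < Suc k" and ij: "i \<noteq> j"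
    have jn: "j < n" using j k by simp
    have VBVc: "V * B * V \<in> carrier_mat n n" using V B by simp
    show "(V * B * V) $$ (i,j) = 0"
    proof (cases "j < k")
      case True
      have "B *\<^sub>v unit_vec n j = B $$ (j,j) \<cdot>\<^sub>v unit_vec n j"
      proof (rule eq_vecI)
        fix l assume "l < dim_vec (B $$ (j,j) \<cdot>\<^sub>v unit_vec n j)"
        hence l: "l < n" by simp
        show "(B *\<^sub>v unit_vec n j) $ l = (B $$ (j,j) \<cdot>\<^sub>v unit_vec n j) $ l"
        proof (cases "l = j")
          case True
          thus ?thesis using mv_unit[OF B jn] l jn B by simp
        next
          case False
          have "B $$ (l,j) = 0" using hBz[OF l jn False] \<open>j < k\<close> by simp
          thus ?thesis using mv_unit[OF B jn] l jn B False by simp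
        qed
      qed (use B in simp)
      hence "(V * B * V) *\<^sub>v unit_vec n j = B $$ (j,j) \<cdot>\<^sub>v unit_vec n j"
        using VBV[of "unit_vec n j"] Vj True V mult_mat_vec[OF V unit_vec_carrier[of n j]] by simp
      thus ?thesis by (rule col_zero_offdiag[OF VBVc jn i ij])
    next
      case False
      hence jk: "j = k" using j by simp
      have "V *\<^sub>v u = V *\<^sub>v (V *\<^sub>v unit_vec n k)" unfolding Vk ..
      also have "\<dots> = (V * V) *\<^sub>v unit_vec n k" using V by (simp add: assoc_mult_mat_vec[of _ n n _ n])
      also have "\<dots> = unit_vec n k" unfolding VV by simp
      finally have Vu: "V *\<^sub>v u = unit_vec n k" .
      have "(V * B * V) *\<^sub>v unit_vec n k = V *\<^sub>v (B *\<^sub>v (V *\<^sub>v unit_vec n k))"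
        by (rule VBV[OF unit_vec_carrier])
      also have "\<dots> = V *\<^sub>v (\<mu> \<cdot>\<^sub>v u)" unfolding Vk ev ..
      also have "\<dots> = \<mu> \<cdot>\<^sub>v (V *\<^sub>v u)" by (rule mult_mat_vec[OF V u])
      finally have "(V * B * V) *\<^sub>v unit_vec n k = \<mu> \<cdot>\<^sub>v unit_vec n k" unfolding Vu .
      thus ?thesis unfolding jk by (rule col_zero_offdiag[OF VBVc k i ij[unfolded jk]])
    qed
  qed
  hence "\<forall>i<n. \<forall>j<Suc k. i \<noteq> j \<longrightarrow> (mat_adjoint (W * V) * A * (W * V)) $$ (i,j) = 0"
    unfolding B2 .
  thus ?case by (intro exI[of _ "W * V"] conjI[OF uWV])
qed

lemma spectral: assumes hA: "hermitian_mat n A"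
  shows "\<exists>U d. unitary_mat n U \<and> A = UD n U d"
proof -
  obtain W where uW: "unitary_mat n W"
    and z: "\<forall>i<n. \<forall>j<n. i \<noteq> j \<longrightarrow> (mat_adjoint W * A * W) $$ (i,j) = 0"
    using diag_k[OF hA, of n] by auto
  have A: "A \<in> carrier_mat n n" and adjA: "mat_adjoint A = A" using hA unfolding hermitian_mat_def by auto
  have W: "W \<in> carrier_mat n n" and W': "mat_adjoint W \<in> carrier_mat n n" using uW by (auto simp: adj_carrier)
  define B where "B = mat_adjoint W * A * W"
  have B: "B \<in> carrier_mat n n" using A W W' by (simp add: B_def)
  have adjB: "mat_adjoint B = B"
  proof -
    have "mat_adjoint B = mat_adjoint W * mat_adjoint (mat_adjoint W * A)"
      unfolding B_def using adj_mult[of "mat_adjoint W * A" n n W n] A W W' by simp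
    also have "mat_adjoint (mat_adjoint W * A) = A * W"
      using adj_mult[OF W' A] adjA by simp
    finally show ?thesis unfolding B_def using A W W' by (simp add: assoc_mult_mat[of _ n n _ n _ n])
  qed
  define d where "d = (\<lambda>i. Re (B $$ (i,i)))"
  have BD: "B = mat_diag n (\<lambda>i. complex_of_real (d i))"
  proof (rule eq_matI)
    fix i j assume "i < dim_row (mat_diag n (\<lambda>i. complex_of_real (d i)))"
      "j < dim_col (mat_diag n (\<lambda>i. complex_of_real (d i)))"
    hence i: "i < n" and j: "j < n" by (auto simp: mat_diag_def)
    show "B $$ (i,j) = mat_diag n (\<lambda>i. complex_of_real (d i)) $$ (i,j)"
    proof (cases "i = j")
      case True
      have "B $$ (i,i) = cnj (B $$ (i,i))"
        using arg_cong[OF adjB, of "\<lambda>M. M $$ (i,i)"] B i by simp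
      hence "Im (B $$ (i,i)) = 0" by (simp add: complex_eq_iff)
      hence "B $$ (i,i) = complex_of_real (d i)" unfolding d_def by (simp add: complex_eq_iff)
      thus ?thesis using True i by (simp add: mat_diag_def)
    next
      case False
      thus ?thesis using z i j unfolding B_def by (simp add: mat_diag_def)
    qed
  qed (use B in \<open>auto simp: mat_diag_def\<close>)
  have "UD n W d = W * B * mat_adjoint W" unfolding UD_def BD ..
  also have "\<dots> = W * (mat_adjoint W * (A * (W * mat_adjoint W)))"
    unfolding B_def using A W W' by (simp add: assoc_mult_mat[of _ n n _ n _ n])
  also have "W * mat_adjoint W = 1\<^sub>m n" by (rule unitary_right[OF uW])
  also have "A * 1\<^sub>m n = A" using A by (rule right_mult_one_mat)
  also have "W * (mat_adjoint W * A) = A" by (rule unit_cancel2[OF uW A])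
  finally have "A = UD n W d" by simp
  thus ?thesis using uW by blast
qed

lemma UD_cong: "(\<And>i. a i = b i) \<Longrightarrow> UD n U a = UD n U b"
proof -
  assume "\<And>i. a i = b i"
  hence "a = b" by (rule ext)
  thus ?thesis by simp
qed

theorem lemma2p6:
  fixes f :: "real \<Rightarrow> real" and n m :: nat
    and \<Phi> :: "complex mat \<Rightarrow> complex mat" and \<tau> :: "complex mat \<Rightarrow> complex"
    and A :: "complex mat"
  assumes "continuous_on {0..} f"
    and "superquadratic f"
    and "unital_positive_map n m \<Phi>"
    and "state_mat m \<tau>"
    and "psd_mat n A"
  shows "f (Re (\<tau> (\<Phi> A))) \<le>
           Re (\<tau> (\<Phi> (mat_fun f n A)))
           - Re (\<tau> (\<Phi> (mat_fun f n (mat_abs n (A - \<tau> (\<Phi> A) \<cdot>\<^sub>m 1\<^sub>m n)))))"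
proof -
  note sq = assms(2) and Phi = assms(3) and tau = assms(4) and pA = assms(5)
  have Pcar: "\<And>X. X \<in> carrier_mat n n \<Longrightarrow> \<Phi> X \<in> carrier_mat m m"
    and Padd: "\<And>X Y. X \<in> carrier_mat n n \<Longrightarrow> Y \<in> carrier_mat n n \<Longrightarrow> \<Phi> (X + Y) = \<Phi> X + \<Phi> Y"
    and Psm: "\<And>c X. X \<in> carrier_mat n n \<Longrightarrow> \<Phi> (c \<cdot>\<^sub>m X) = c \<cdot>\<^sub>m \<Phi> X"
    and Ppos: "\<And>X. psd_mat n X \<Longrightarrow> psd_mat m (\<Phi> X)"
    and P1: "\<Phi> (1\<^sub>m n) = 1\<^sub>m m"
    using Phi unfolding unital_positive_map_def linear_map_mat_def by auto
  have Tadd: "\<And>X Y. X \<in> carrier_mat m m \<Longrightarrow> Y \<in> carrier_mat m m \<Longrightarrow> \<tau> (X + Y) = \<tau> X + \<tau> Y"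
    and Tsm: "\<And>c X. X \<in> carrier_mat m m \<Longrightarrow> \<tau> (c \<cdot>\<^sub>m X) = c * \<tau> X"
    and Tpos: "\<And>X. psd_mat m X \<Longrightarrow> \<tau> X \<in> \<real> \<and> 0 \<le> Re (\<tau> X)"
    and T1: "\<tau> (1\<^sub>m m) = 1"
    using tau unfolding state_mat_def by auto
  have hA: "hermitian_mat n A" using pA unfolding psd_mat_def by simp
  obtain U d where uU: "unitary_mat n U" and Ad: "A = UD n U d" using spectral[OF hA] by blast
  have U: "U \<in> carrier_mat n n" using uU by simp
  have d0: "\<And>i. i < n \<Longrightarrow> d i \<ge> 0" using psd_UD_nonneg[OF uU] pA Ad by blast
  have Acar: "A \<in> carrier_mat n n" using hA unfolding hermitian_mat_def by simp
  define s where "s = Re (\<tau> (\<Phi> A))"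
  have "\<tau> (\<Phi> A) \<in> \<real>" and s0: "0 \<le> s" using Tpos[OF Ppos[OF pA]] unfolding s_def by auto
  hence tPA: "\<tau> (\<Phi> A) = complex_of_real s" unfolding s_def by (simp add: complex_eq_iff complex_is_Real_iff)
  obtain C where C: "\<And>t. t \<ge> 0 \<Longrightarrow> f t \<ge> f s + C * (t - s) + f \<bar>t - s\<bar>"
    using sq s0 unfolding superquadratic_def by blast
  have one: "1\<^sub>m n = UD n U (\<lambda>_. 1)" using UD_one[OF uU] by simp
  define X where "X = UD n U (\<lambda>i. d i - s)"
  have X1: "A - \<tau> (\<Phi> A) \<cdot>\<^sub>m 1\<^sub>m n = X"
  proof -
    have "A - \<tau> (\<Phi> A) \<cdot>\<^sub>m 1\<^sub>m n = UD n U d - UD n U (\<lambda>i. s * 1)"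
      unfolding tPA unfolding Ad one UD_smult[OF U] ..
    also have "\<dots> = X" unfolding X_def UD_minus[OF U] by simp
    finally show ?thesis .
  qed
  have X2: "X = A + complex_of_real (- s) \<cdot>\<^sub>m 1\<^sub>m n"
  proof -
    have "A + complex_of_real (- s) \<cdot>\<^sub>m 1\<^sub>m n = UD n U (\<lambda>i. d i + - s * 1)"
      unfolding Ad one UD_smult[OF U] UD_add[OF U] ..
    thus ?thesis unfolding X_def by simp
  qed
  have absX: "mat_abs n X = UD n U (\<lambda>i. \<bar>d i - s\<bar>)"
  proof -
    have "mat_adjoint X * X = UD n U (\<lambda>i. (d i - s) * (d i - s))"
      unfolding X_def UD_adj[OF U] UD_mult[OF uU] ..
    thus ?thesis unfolding mat_abs_def using mat_fun_UD[OF uU, of sqrt] by simp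
  qed
  define G where "G = UD n U (\<lambda>i. f \<bar>d i - s\<bar>)"
  have fG: "mat_fun f n (mat_abs n (A - \<tau> (\<Phi> A) \<cdot>\<^sub>m 1\<^sub>m n)) = G"
    unfolding X1 absX G_def mat_fun_UD[OF uU] ..
  define F where "F = UD n U (\<lambda>i. f (d i))"
  have fF: "mat_fun f n A = F" unfolding Ad F_def mat_fun_UD[OF uU] ..
  define g where "g = (\<lambda>i. f (d i) - f s - C * (d i - s) - f \<bar>d i - s\<bar>)"
  define M where "M = UD n U g"
  have pM: "psd_mat n M" unfolding M_def
    by (rule psd_UD[OF uU]) (use C d0 in \<open>force simp: g_def\<close>)
  have Fsplit: "F = M + (complex_of_real (f s) \<cdot>\<^sub>m 1\<^sub>m n + (complex_of_real C \<cdot>\<^sub>m X + G))"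
  proof -
    have "M + (complex_of_real (f s) \<cdot>\<^sub>m 1\<^sub>m n + (complex_of_real C \<cdot>\<^sub>m X + G))
      = UD n U (\<lambda>i. g i + (f s * 1 + (C * (d i - s) + f \<bar>d i - s\<bar>)))"
      unfolding M_def one X_def G_def UD_smult[OF U] UD_add[OF U] ..
    also have "\<dots> = F" unfolding F_def by (rule UD_cong) (simp add: g_def)
    finally show ?thesis by simp
  qed
  have Mc: "M \<in> carrier_mat n n" and Gc: "G \<in> carrier_mat n n" and Xc: "X \<in> carrier_mat n n"
    using U by (auto simp: M_def G_def X_def)
  have oc: "1\<^sub>m n \<in> carrier_mat n n" by simp
  have PX: "\<Phi> X = \<Phi> A + complex_of_real (- s) \<cdot>\<^sub>m 1\<^sub>m m"
    unfolding X2 using Padd[OF Acar smult_carrier_mat[OF oc]] Psm[OF oc] P1 by simp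
  have tPX: "\<tau> (\<Phi> X) = 0"
    unfolding PX using Tadd[OF Pcar[OF Acar] smult_carrier_mat[OF one_carrier_mat]] Tsm[OF one_carrier_mat] T1 tPA
    by simp
  have "\<Phi> F = \<Phi> M + (complex_of_real (f s) \<cdot>\<^sub>m 1\<^sub>m m + (complex_of_real C \<cdot>\<^sub>m \<Phi> X + \<Phi> G))"
    unfolding Fsplit using Mc Gc Xc oc Padd Psm P1 by simp
  hence "\<tau> (\<Phi> F) = \<tau> (\<Phi> M) + (complex_of_real (f s) + (complex_of_real C * \<tau> (\<Phi> X) + \<tau> (\<Phi> G)))"
    using Pcar[OF Mc] Pcar[OF Gc] Pcar[OF Xc] Tadd Tsm T1 by simp
  hence "Re (\<tau> (\<Phi> F)) = Re (\<tau> (\<Phi> M)) + f s + Re (\<tau> (\<Phi> G))" unfolding tPX by simp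
  moreover have "0 \<le> Re (\<tau> (\<Phi> M))" using Tpos[OF Ppos[OF pM]] by simp
  ultimately show ?thesis unfolding fF fG s_def[symmetric] by simp
qed

end
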